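(* Let $1\le k<g$ and $v_1,\dots,v_k\in\mathbb{C}^g$ (column vectors). Let $A$ be the $k\times g$ matrix whose $i$-th row is ${}^tv_i$, and define the vector $w=(w_J)_{J\in P^*_{g-k}(X_g)}$ by $w_J=\epsilon(J,X_g\setminus J)\det(A_{X_g\setminus J})$, where $A_{X_g\setminus J}$ is the $k\times k$ submatrix of $A$ with columns in $X_g\setminus J$ and $\epsilon(J,X_g\setminus J)$ is the sign of the permutation rearranging the concatenation of $J$ and $X_g\setminus J$ (each in increasing order) into $(1,2,\dots,g)$. (Thus $w$ is the coordinate vector of $v_1\wedge\dots\wedge v_k$ in the basis $\{\ast_H e_I\}$ given by the Hodge star.) Then \[ v_1{}^tv_1\ast\dots\ast v_k{}^tv_k=\frac{1}{k!}\,w\,{}^tw, \] as matrices indexed by $P^*_{g-k}(X_g)$.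
   Context: Notation: $X_g=\{1,\dots,g\}$; $P^*_k(X)$ is the set of $k$-element subsets of $X$, written increasingly; $M(I,J)$ is the submatrix with rows $I$, columns $J$. Matrices of maps on $\bigwedge^pV$ ($V=\mathbb{C}^g$) are indexed by $P^*_p(X_g)$. For $A$ on $\bigwedge^pV$, $B$ on $\bigwedge^qV$, $p+q\le g$: \[ (A\sqcap B)^H_K=\binom{p+q}{p}^{-1}\sum_{I\in P^*_p(H),\,J\in P^*_p(K)}(-1)^{s_H(I)+s_K(J)}A^I_J\,B^{H\setminus I}_{K\setminus J},\quad H,K\in P^*_{p+q}(X_g), \] with $s_H(I)$ the sum of positions of elements of $I$ within $H$; iterated products are taken left to right. For $g\times g$ matrices $A_1,\dots,A_k$ ($k<g$), the product $A_1\ast\dots\ast A_k$ is the matrix indexed by $P^*_{g-k}(X_g)$ with \[ (A_1\ast\dots\ast A_k)^I_J=(-1)^{|I|_\Sigma+|J|_\Sigma}(A_1\sqcap\dots\sqcap A_k)^{X_g\setminus I}_{X_g\setminus J}, \] where $|I|_\Sigma$ denotes the sum of the elements of $I$. *)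

theory Defs
  imports "Jordan_Normal_Form.Determinant"
begin

text \<open>Matrices of maps on the p-th exterior power are functions indexed by finite subsets
  of {1..g} (increasingly ordered sets). g x g matrices are functions nat => nat => complex
  indexed by 1..g.\<close>

type_synonym smat = "nat set \<Rightarrow> nat set \<Rightarrow> complex"
type_synonym gmat = "nat \<Rightarrow> nat \<Rightarrow> complex"

definition Xg :: "nat \<Rightarrow> nat set" where "Xg g = {1..g}"

definition Pk :: "nat \<Rightarrow> nat set \<Rightarrow> nat set set" where
  "Pk k X = {I. I \<subseteq> X \<and> card I = k}"

definition pos :: "nat set \<Rightarrow> nat \<Rightarrow> nat" where
  "pos H x = card {y\<in>H. y \<le> x}"

definition sH :: "nat set \<Rightarrow> nat set \<Rightarrow> nat" where
  "sH H I = (\<Sum>x\<in>I. pos H x)"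

definition sqcap :: "nat \<Rightarrow> nat \<Rightarrow> smat \<Rightarrow> smat \<Rightarrow> smat" where
  "sqcap p q A B H K = inverse (of_nat ((p + q) choose p)) *
     (\<Sum>I\<in>Pk p H. \<Sum>J\<in>Pk p K.
        (-1) ^ (sH H I + sH K J) * A I J * B (H - I) (K - J))"

text \<open>a g x g matrix viewed as a matrix on the first exterior power (indexed by singletons)\<close>
definition lift1 :: "gmat \<Rightarrow> smat" where
  "lift1 A I J = A (the_elem I) (the_elem J)"

fun iter_sqcap :: "(nat \<Rightarrow> gmat) \<Rightarrow> nat \<Rightarrow> smat" where
  "iter_sqcap As 0 = (\<lambda>I J. if I = {} \<and> J = {} then 1 else 0)"
| "iter_sqcap As (Suc 0) = lift1 (As 1)"
| "iter_sqcap As (Suc (Suc n)) = sqcap (Suc n) 1 (iter_sqcap As (Suc n)) (lift1 (As (Suc (Suc n))))"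

definition star_prod :: "nat \<Rightarrow> (nat \<Rightarrow> gmat) \<Rightarrow> nat \<Rightarrow> smat" where
  "star_prod g As k I J = (-1) ^ (\<Sum>I + \<Sum>J) * iter_sqcap As k (Xg g - I) (Xg g - J)"

definition eps :: "nat \<Rightarrow> nat set \<Rightarrow> int" where
  "eps g J = (let L = sorted_list_of_set J @ sorted_list_of_set (Xg g - J) in
     signof (\<lambda>i. if i \<in> Xg g then L ! (i - 1) else i))"

definition subA :: "(nat \<Rightarrow> nat \<Rightarrow> complex) \<Rightarrow> nat \<Rightarrow> nat set \<Rightarrow> complex mat" where
  "subA v k C = mat k k (\<lambda>(i, j). v (i + 1) (sorted_list_of_set C ! j))"

definition wvec :: "nat \<Rightarrow> (nat \<Rightarrow> nat \<Rightarrow> complex) \<Rightarrow> nat \<Rightarrow> nat set \<Rightarrow> complex" where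
  "wvec g v k J = of_int (eps g J) * det (subA v k (Xg g - J))"

end

theory Submission imports Defs begin

lemma det_1x1: "det (mat 1 1 f) = (f (0,0) :: 'a::comm_ring_1)"
proof -
  have "upper_triangular (mat 1 1 f)" unfolding upper_triangular_def by auto
  from det_upper_triangular[OF this, of 1] show ?thesis
    by (simp add: diag_mat_def)
qed

lemma sum_sorted:
  assumes "finite H"
  shows "sum f H = (\<Sum>a<card H. f (sorted_list_of_set H ! a))"
proof -
  have "bij_betw ((!) (sorted_list_of_set H)) {..<card H} H"
    by (rule bij_betw_nth) (use assms in auto)
  from sum.reindex_bij_betw[OF this, of f] show ?thesis by simp
qed

lemma pos_nth:
  assumes "finite H" "a < card H"
  shows "pos H (sorted_list_of_set H ! a) = Suc a"
proof -
  let ?hs = "sorted_list_of_set H"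
  have st: "sorted_wrt (<) ?hs" by simp
  have len: "length ?hs = card H" using assms by simp
  have "{y\<in>H. y \<le> ?hs ! a} = (!) ?hs ` {..a}"
  proof
    show "{y\<in>H. y \<le> ?hs ! a} \<subseteq> (!) ?hs ` {..a}"
    proof
      fix y assume y: "y \<in> {y\<in>H. y \<le> ?hs ! a}"
      then have "y \<in> set ?hs" using assms by simp
      then obtain j where j: "j < length ?hs" "y = ?hs ! j" by (auto simp: in_set_conv_nth)
      have "j \<le> a"
      proof (rule ccontr)
        assume "\<not> j \<le> a"
        then have "?hs ! a < ?hs ! j" using sorted_wrt_nth_less[OF st, of a j] j by simp
        then show False using y j by simp
      qed
      then show "y \<in> (!) ?hs ` {..a}" using j by auto
    qed
  next
    show "(!) ?hs ` {..a} \<subseteq> {y\<in>H. y \<le> ?hs ! a}"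
    proof
      fix y assume "y \<in> (!) ?hs ` {..a}"
      then obtain j where j: "j \<le> a" "y = ?hs ! j" by auto
      have "?hs ! j \<le> ?hs ! a" using sorted_nth_mono[of ?hs j a] j len assms by simp
      moreover have "?hs ! j \<in> H" using j len assms
        by (metis le_less_trans nth_mem set_sorted_list_of_set)
      ultimately show "y \<in> {y\<in>H. y \<le> ?hs ! a}" using j by simp
    qed
  qed
  moreover have "inj_on ((!) ?hs) {..a}"
    using inj_on_nth[of ?hs "{..a}"] assms len by simp
  ultimately show ?thesis unfolding pos_def by (simp add: card_image)
qed

lemma sH_remove:
  assumes "finite H" "x \<in> H"
  shows "sH H (H - {x}) + pos H x = sH H H"
  unfolding sH_def using sum.remove[OF assms, of "pos H"] by simp

lemma sH_full:
  assumes "finite H"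
  shows "sH H H = (\<Sum>a<card H. Suc a)"
  unfolding sH_def using sum_sorted[OF assms, of "pos H"] pos_nth[OF assms]
  by simp

lemma bij_remove:
  assumes "finite H" "card H = Suc m"
  shows "bij_betw (\<lambda>x. H - {x}) H (Pk m H)"
  unfolding bij_betw_def
proof
  show "inj_on (\<lambda>x. H - {x}) H" by (rule inj_onI) blast
  show "(\<lambda>x. H - {x}) ` H = Pk m H"
  proof
    show "(\<lambda>x. H - {x}) ` H \<subseteq> Pk m H" using assms by (auto simp: Pk_def)
    show "Pk m H \<subseteq> (\<lambda>x. H - {x}) ` H"
    proof
      fix I assume "I \<in> Pk m H"
      then have I: "I \<subseteq> H" "card I = m" by (auto simp: Pk_def)
      then have "card (H - I) = 1" using assms by (simp add: card_Diff_subset finite_subset)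
      then obtain x where x: "H - I = {x}" by (auto simp: card_Suc_eq)
      then have "I = H - {x}" "x \<in> H" using I by auto
      then show "I \<in> (\<lambda>x. H - {x}) ` H" by auto
    qed
  qed
qed

lemma sum_Pk:
  assumes "finite H" "card H = Suc m"
  shows "(\<Sum>I\<in>Pk m H. f I) = (\<Sum>a<Suc m. f (H - {sorted_list_of_set H ! a}))"
proof -
  have "(\<Sum>I\<in>Pk m H. f I) = (\<Sum>x\<in>H. f (H - {x}))"
    using sum.reindex_bij_betw[OF bij_remove[OF assms], of f] by simp
  also have "\<dots> = (\<Sum>a<Suc m. f (H - {sorted_list_of_set H ! a}))"
    using sum_sorted[OF assms(1)] assms(2) by simp
  finally show ?thesis .
qed

lemma nth_remove1_distinct:
  "distinct xs \<Longrightarrow> a < length xs \<Longrightarrow> j < length xs - 1 \<Longrightarrow>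
   remove1 (xs ! a) xs ! j = xs ! (if j < a then j else Suc j)"
proof (induction xs arbitrary: a j)
  case Nil then show ?case by simp
next
  case (Cons x xs)
  show ?case
  proof (cases a)
    case 0 then show ?thesis using Cons by simp
  next
    case (Suc a')
    then have ne: "xs ! a' \<noteq> x" using Cons.prems by auto
    show ?thesis
    proof (cases j)
      case 0 then show ?thesis using Suc ne by simp
    next
      case (Suc j')
      then show ?thesis using Cons \<open>a = Suc a'\<close> ne by auto
    qed
  qed
qed


lemma subA_delete:
  assumes "finite H" "card H = Suc m" "a < Suc m"
  shows "mat_delete (subA v (Suc m) H) m a = subA v m (H - {sorted_list_of_set H ! a})"
proof -
  let ?hs = "sorted_list_of_set H"
  have d: "distinct ?hs" "length ?hs = Suc m" using assms by auto
  have r: "sorted_list_of_set (H - {?hs ! a}) = remove1 (?hs ! a) ?hs"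
    using sorted_list_of_set_remove[OF assms(1)] .
  show ?thesis
    unfolding mat_delete_def subA_def r
    by (rule eq_matI) (use d assms nth_remove1_distinct[of ?hs a] in auto)
qed

lemma laplace_subA:
  assumes "finite H" "card H = Suc m"
  shows "det (subA v (Suc m) H) = (\<Sum>a<Suc m. v (Suc m) (sorted_list_of_set H ! a) *
     ((-1)^(m+a) * det (subA v m (H - {sorted_list_of_set H ! a}))))"
proof -
  have c: "subA v (Suc m) H \<in> carrier_mat (Suc m) (Suc m)" unfolding subA_def by simp
  show ?thesis
    unfolding laplace_expansion_row[OF c, of m, OF lessI]
    by (rule sum.cong) (use assms subA_delete[OF assms] in \<open>auto simp: cofactor_def subA_def\<close>)
qed


lemma m1sq: "((-1::complex)^n) * (-1)^n = 1"
  by (metis power_add power_minus1_even mult_2 even_add)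

lemma sum_prod2: "(\<Sum>a\<in>A. \<Sum>b\<in>B. (c::complex) * (f a * g b)) = c * (sum f A * sum g B)"
proof -
  have "c * (sum f A * sum g B) = c * (\<Sum>a\<in>A. \<Sum>b\<in>B. f a * g b)" by (simp only: sum_product)
  also have "\<dots> = (\<Sum>a\<in>A. \<Sum>b\<in>B. c * (f a * g b))" by (simp add: sum_distrib_left)
  finally show ?thesis by simp
qed

lemma sgn_eq: "(-1::complex)^(Suc m + a) = (-1)^m * (-1)^(Suc a)"
  by (simp only: power_add[symmetric]) simp

lemma sign_remove:
  assumes "finite H" "a < card H"
  shows "(-1::complex)^(sH H (H - {sorted_list_of_set H ! a})) = (-1)^(sH H H) * (-1)^(Suc a)"
proof -
  have x: "sorted_list_of_set H ! a \<in> H" using assms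
    by (metis length_sorted_list_of_set nth_mem set_sorted_list_of_set)
  have e: "sH H H = sH H (H - {sorted_list_of_set H ! a}) + Suc a"
    using sH_remove[OF assms(1) x] pos_nth[OF assms] by simp
  show ?thesis unfolding e power_add using m1sq[of "Suc a"] by (simp add: mult.assoc)
qed

lemma iter_main:
  "card H = Suc m \<Longrightarrow> card K = Suc m \<Longrightarrow>
   iter_sqcap (\<lambda>i a b. v i a * v i b) (Suc m) H K
     = inverse (of_nat (fact (Suc m))) * det (subA v (Suc m) H) * det (subA v (Suc m) K)"
proof (induction m arbitrary: H K)
  case 0
  then obtain h k where hk: "H = {h}" "K = {k}" by (auto simp: card_Suc_eq)
  show ?case using hk using det_1x1[where f="\<lambda>(i, j). v (Suc i) ([h] ! j)"] det_1x1[where f="\<lambda>(i, j). v (Suc i) ([k] ! j)"]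
    by (simp add: lift1_def subA_def)
next
  case (Suc m)
  let ?As = "\<lambda>i a b. v i a * v i b"
  let ?w = "v (Suc (Suc m))"
  let ?D = "\<lambda>H. det (subA v (Suc m) H)"
  let ?hs = "sorted_list_of_set H" and ?ks = "sorted_list_of_set K"
  have fH: "finite H" and fK: "finite K" using Suc.prems by (auto intro: card_ge_0_finite)
  define fH where "fH = (\<lambda>a. (-1::complex)^(Suc a) * ?w (?hs ! a) * ?D (H - {?hs ! a}))"
  define fK where "fK = (\<lambda>a. (-1::complex)^(Suc a) * ?w (?ks ! a) * ?D (K - {?ks ! a}))"
  define sg where "sg = (-1::complex)^(sH H H + sH K K)"
  have sg1: "sg = 1"
  proof -
    have "sH H H = sH K K" using sH_full[OF fH] sH_full[OF fK] Suc.prems by simp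
    then show ?thesis unfolding sg_def by (metis power_add m1sq)
  qed
  have xH: "?hs ! a \<in> H" if "a < Suc (Suc m)" for a using that Suc.prems fH
    by (metis length_sorted_list_of_set nth_mem set_sorted_list_of_set)
  have xK: "?ks ! a \<in> K" if "a < Suc (Suc m)" for a using that Suc.prems fK
    by (metis length_sorted_list_of_set nth_mem set_sorted_list_of_set)
  have trm: "(-1) ^ (sH H (H - {?hs ! a}) + sH K (K - {?ks ! b})) *
        iter_sqcap ?As (Suc m) (H - {?hs ! a}) (K - {?ks ! b}) *
        lift1 (?As (Suc (Suc m))) (H - (H - {?hs ! a})) (K - (K - {?ks ! b}))
      = sg * inverse (of_nat (fact (Suc m))) * (fH a * fK b)"
    if ab: "a < Suc (Suc m)" "b < Suc (Suc m)" for a b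
  proof -
    have cH: "card (H - {?hs ! a}) = Suc m" using xH[OF ab(1)] Suc.prems fH by simp
    have cK: "card (K - {?ks ! b}) = Suc m" using xK[OF ab(2)] Suc.prems fK by simp
    have d1: "H - (H - {?hs ! a}) = {?hs ! a}" using xH[OF ab(1)] by auto
    have d2: "K - (K - {?ks ! b}) = {?ks ! b}" using xK[OF ab(2)] by auto
    have s: "(-1::complex) ^ (sH H (H - {?hs ! a}) + sH K (K - {?ks ! b}))
       = sg * ((-1)^(Suc a) * (-1)^(Suc b))"
      unfolding power_add sg_def
      using sign_remove[OF fH, of a] sign_remove[OF fK, of b] ab Suc.prems by simp
    show ?thesis
      unfolding s Suc.IH[OF cH cK] d1 d2 fH_def fK_def
      by (simp add: lift1_def algebra_simps)
  qed
  have "iter_sqcap ?As (Suc (Suc m)) H K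
      = inverse (of_nat (Suc (Suc m) choose Suc m)) *
        (\<Sum>I\<in>Pk (Suc m) H. \<Sum>J\<in>Pk (Suc m) K.
          (-1) ^ (sH H I + sH K J) * iter_sqcap ?As (Suc m) I J *
          lift1 (?As (Suc (Suc m))) (H - I) (K - J))"
    by (simp add: sqcap_def)
  also have "\<dots> = inverse (of_nat (Suc (Suc m))) *
        (\<Sum>a<Suc (Suc m). \<Sum>b<Suc (Suc m). sg * inverse (of_nat (fact (Suc m))) * (fH a * fK b))"
    unfolding binomial_Suc_n sum_Pk[OF fH Suc.prems(1)] sum_Pk[OF fK Suc.prems(2)]
    using trm by simp
  also have "\<dots> = inverse (of_nat (fact (Suc (Suc m)))) * (sum fH {..<Suc (Suc m)} * sum fK {..<Suc (Suc m)})"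
  proof -
    have "(\<Sum>a<Suc (Suc m). \<Sum>b<Suc (Suc m). sg * inverse (of_nat (fact (Suc m))) * (fH a * fK b))
       = sg * inverse (of_nat (fact (Suc m))) * (sum fH {..<Suc (Suc m)} * sum fK {..<Suc (Suc m)})"
      by (rule sum_prod2)
    moreover have "inverse (of_nat (Suc (Suc m)) :: complex) * inverse (of_nat (fact (Suc m)))
       = inverse (of_nat (fact (Suc (Suc m))))"
      by (simp only: fact_Suc[of "Suc m"] of_nat_mult inverse_mult_distrib of_nat_id)
    ultimately show ?thesis unfolding sg1 by (simp add: mult.assoc[symmetric])
  qed
  also have "sum fH {..<Suc (Suc m)} = (-1)^m * det (subA v (Suc (Suc m)) H)"
    unfolding laplace_subA[OF fH Suc.prems(1)] sum_distrib_left fH_def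
    by (rule sum.cong[OF refl]) (simp only: sgn_eq mult_ac, simp only: mult.assoc[symmetric] m1sq mult_1_left)
  also have "sum fK {..<Suc (Suc m)} = (-1)^m * det (subA v (Suc (Suc m)) K)"
    unfolding laplace_subA[OF fK Suc.prems(2)] sum_distrib_left fK_def
    by (rule sum.cong[OF refl]) (simp only: sgn_eq mult_ac, simp only: mult.assoc[symmetric] m1sq mult_1_left)
  finally show ?case using m1sq[of m] by (simp add: algebra_simps)
qed


definition pJ :: "nat \<Rightarrow> nat set \<Rightarrow> nat \<Rightarrow> nat" where
  "pJ g J = (let L = sorted_list_of_set J @ sorted_list_of_set (Xg g - J) in
     (\<lambda>i. if i \<in> Xg g then L ! (i - 1) else i))"

lemma eps_pJ: "eps g J = sign (pJ g J)"
  unfolding eps_def pJ_def Let_def by simp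

lemma tau_mono:
  assumes "x < y" "\<not> (j \<in> S \<and> Suc j \<in> S)" "x \<in> S" "y \<in> S"
  shows "transpose j (Suc j) x < transpose j (Suc j) y"
  using assms unfolding transpose_def by auto

lemma sorted_map_tau:
  assumes "finite S" "\<not> (j \<in> S \<and> Suc j \<in> S)"
  shows "sorted_list_of_set (transpose j (Suc j) ` S) = map (transpose j (Suc j)) (sorted_list_of_set S)"
proof -
  let ?t = "transpose j (Suc j)"
  have "sorted_wrt (\<lambda>x y. ?t x < ?t y) (sorted_list_of_set S)"
    by (rule sorted_wrt_mono_rel[OF _ strict_sorted_list_of_set]) (use assms tau_mono in auto)
  then have "sorted_wrt (<) (map ?t (sorted_list_of_set S))" by (simp add: sorted_wrt_map)
  moreover have "card (?t ` S) = card S" by (simp add: card_image)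
  moreover have "set (map ?t (sorted_list_of_set S)) = ?t ` S" using assms by simp
  moreover have "length (map ?t (sorted_list_of_set S)) = card (?t ` S)" using \<open>card (?t ` S) = card S\<close> by simp
  ultimately show ?thesis using sorted_list_of_set_unique[of "?t ` S" "map ?t (sorted_list_of_set S)"] assms by blast
qed

lemma exists_gap:
  assumes "J \<subseteq> Xg g" "J \<noteq> {1..card J}"
  shows "\<exists>j. 1 \<le> j \<and> j \<notin> J \<and> Suc j \<in> J"
proof (rule ccontr)
  assume na: "\<not> ?thesis"
  have fin: "finite J" using assms(1) finite_subset unfolding Xg_def by blast
  have ne: "J \<noteq> {}" using assms by auto
  define M where "M = Max J"
  have MJ: "M \<in> J" using fin ne M_def by simp
  have down: "M - d \<ge> 1 \<longrightarrow> M - d \<in> J" for d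
  proof (induction d)
    case 0 then show ?case using MJ by simp
  next
    case (Suc d)
    show ?case
    proof
      assume "1 \<le> M - Suc d"
      then have e: "M - d = Suc (M - Suc d)" "1 \<le> M - d" by auto
      then have "Suc (M - Suc d) \<in> J" using Suc.IH by simp
      then show "M - Suc d \<in> J" using na \<open>1 \<le> M - Suc d\<close> by blast
    qed
  qed
  have "{1..M} \<subseteq> J"
  proof
    fix x assume "x \<in> {1..M}"
    then show "x \<in> J" using down[of "M - x"] by auto
  qed
  moreover have "J \<subseteq> {1..M}" using assms(1) fin M_def unfolding Xg_def by auto
  ultimately have "J = {1..M}" by auto
  then show False using assms(2) by simp
qed

lemma eps_main:
  "\<forall>J. J \<subseteq> Xg g \<longrightarrow> \<Sum>J = n \<longrightarrow>
     permutation (pJ g J) \<and> sign (pJ g J) * (-1::int)^(\<Sum>J) = (-1)^(\<Sum>{1..card J})"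
proof (induction n rule: less_induct)
  case (less n)
  show ?case
  proof (intro allI impI)
    fix J assume J: "J \<subseteq> Xg g" and n: "\<Sum>J = n"
    have fin: "finite J" using J finite_subset unfolding Xg_def by blast
    show "permutation (pJ g J) \<and> sign (pJ g J) * (-1::int)^(\<Sum>J) = (-1)^(\<Sum>{1..card J})"
    proof (cases "J = {1..card J}")
      case True
      let ?m = "card J"
      have mg: "?m \<le> g" using J True unfolding Xg_def by (metis card_atLeastAtMost card_mono finite_atLeastAtMost diff_Suc_1)
      have c0: "Xg g - {1..?m} = {Suc ?m..<Suc g}" unfolding Xg_def by auto
      have c: "Xg g - J = {Suc ?m..<Suc g}" using c0 True by metis
      have l: "sorted_list_of_set J @ sorted_list_of_set (Xg g - J) = [1..<Suc g]"
      proof -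
        have "sorted_list_of_set J = [1..<Suc ?m]"
          using True by (metis atLeastLessThanSuc_atLeastAtMost sorted_list_of_set_range)
        moreover have e: "Suc ?m + (g - ?m) = Suc g" using mg by simp
        moreover have "(1::nat) \<le> Suc ?m" by simp
        note X = upt_add_eq_append[OF this, of "g - ?m", unfolded e]
        ultimately show ?thesis unfolding c using X by simp
      qed
      have "pJ g J = id"
        unfolding pJ_def Let_def l
      proof (rule ext)
        fix i
        show "(if i \<in> Xg g then [1..<Suc g] ! (i - 1) else i) = id i"
        proof (cases "i \<in> Xg g")
          case True
          then have "i - 1 < Suc g - 1" "1 \<le> i" unfolding Xg_def by auto
          then have "[1..<Suc g] ! (i - 1) = 1 + (i - 1)" by (simp only: nth_upt length_upt)
          then show ?thesis using True \<open>1 \<le> i\<close> by simp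
        qed simp
      qed
      then show ?thesis using True by simp
    next
      case False
      obtain j where j: "1 \<le> j" "j \<notin> J" "Suc j \<in> J" using exists_gap[OF J False] by blast
      let ?t = "transpose j (Suc j)"
      define J' where "J' = insert j (J - {Suc j})"
      have jX: "j \<in> Xg g" "Suc j \<in> Xg g" using j J unfolding Xg_def by auto
      have J'X: "J' \<subseteq> Xg g" using J jX unfolding J'_def by auto
      have fin': "finite J'" using fin unfolding J'_def by simp
      have s1: "\<Sum>J = \<Sum>(J - {Suc j}) + Suc j" using sum.remove[OF fin j(3), of id] by simp
      have s2: "\<Sum>J' = \<Sum>(J - {Suc j}) + j" unfolding J'_def using fin j by simp
      have sJ: "\<Sum>J = Suc (\<Sum>J')" using s1 s2 by simp
      have cJ: "card J' = card J" unfolding J'_def using fin j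
        by (simp add: card_insert_if) (metis Suc_pred card_gt_0_iff empty_iff)
      have lt: "\<Sum>J' < n" using sJ n by simp
      have IH: "permutation (pJ g J')" "sign (pJ g J') * (-1::int)^(\<Sum>J') = (-1)^(\<Sum>{1..card J'})"
        using less.IH[OF lt, rule_format, OF J'X refl] by auto
      have fix0: "?t ` (J - {Suc j}) = J - {Suc j}"
      proof -
        have "?t ` (J - {Suc j}) = id ` (J - {Suc j})"
          by (rule image_cong[OF refl]) (use j in \<open>auto intro: transpose_apply_other\<close>)
        then show ?thesis by simp
      qed
      have tJ: "?t ` J' = J" unfolding J'_def image_insert fix0 using j(3) by auto
      have bij: "bij_betw ?t (Xg g) (Xg g)"
        using permutes_swap_id[OF jX] permutes_imp_bij by blast
      have tC: "?t ` (Xg g - J') = Xg g - J"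
      proof -
        have "?t ` (Xg g - J') = ?t ` Xg g - ?t ` J'"
          by (rule inj_on_image_set_diff[OF bij_betw_imp_inj_on[OF bij]]) (use J'X in auto)
        then show ?thesis unfolding tJ bij_betw_imp_surj_on[OF bij] .
      qed
      have LJ: "sorted_list_of_set J @ sorted_list_of_set (Xg g - J)
          = map ?t (sorted_list_of_set J' @ sorted_list_of_set (Xg g - J'))"
      proof -
        have "sorted_list_of_set J = map ?t (sorted_list_of_set J')"
        proof -
          have nj: "\<not> (j \<in> J' \<and> Suc j \<in> J')" unfolding J'_def by simp
          show ?thesis using sorted_map_tau[OF fin' nj] unfolding tJ .
        qed
        moreover have "sorted_list_of_set (Xg g - J) = map ?t (sorted_list_of_set (Xg g - J'))"
        proof -
          have nj: "\<not> (j \<in> Xg g - J' \<and> Suc j \<in> Xg g - J')" unfolding J'_def by simp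
          have ff: "finite (Xg g - J')" by (simp add: Xg_def)
          show ?thesis using sorted_map_tau[OF ff nj] unfolding tC .
        qed
        ultimately show ?thesis by simp
      qed
      have len: "length (sorted_list_of_set J' @ sorted_list_of_set (Xg g - J')) = g"
      proof -
        have "card J' \<le> card (Xg g)" using J'X by (intro card_mono) (auto simp: Xg_def)
        then show ?thesis using J'X fin' by (simp add: card_Diff_subset Xg_def)
      qed
      have pe: "pJ g J = ?t \<circ> pJ g J'"
      proof (rule ext)
        fix i
        show "pJ g J i = (?t \<circ> pJ g J') i"
        proof (cases "i \<in> Xg g")
          case True
          then have "i - 1 < g" unfolding Xg_def by auto
          let ?L = "sorted_list_of_set J' @ sorted_list_of_set (Xg g - J')"
          have nm: "map ?t ?L ! (i - 1) = ?t (?L ! (i - 1))"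
            by (rule nth_map) (use len \<open>i - 1 < g\<close> in simp)
          have "pJ g J i = map ?t ?L ! (i - 1)" using True unfolding pJ_def Let_def LJ by simp
          moreover have "pJ g J' i = ?L ! (i - 1)" using True unfolding pJ_def Let_def by simp
          ultimately show ?thesis using nm by simp
        next
          case False
          then have "i \<noteq> j" "i \<noteq> Suc j" using jX by auto
          then show ?thesis using False unfolding pJ_def Let_def by (simp add: transpose_def)
        qed
      qed
      have perm: "permutation (pJ g J)" unfolding pe
        using permutation_compose[OF permutation_swap_id IH(1)] by simp
      have "sign (pJ g J) = - sign (pJ g J')"
        unfolding pe sign_compose[OF permutation_swap_id IH(1)] sign_swap_id by simp
      then have "sign (pJ g J) * (-1::int)^(\<Sum>J) = sign (pJ g J') * (-1::int)^(\<Sum>J')"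
        unfolding sJ by simp
      then show ?thesis using IH cJ perm by simp
    qed
  qed
qed

lemma eps_sign:
  assumes "J \<subseteq> Xg g"
  shows "eps g J * (-1::int)^(\<Sum>J) = (-1)^(\<Sum>{1..card J})"
  using eps_main[of g "\<Sum>J"] assms unfolding eps_pJ by auto


lemma m1sq_int: "((-1::int)^n) * (-1)^n = 1"
  by (metis power_add power_minus1_even mult_2 even_add)

lemma eps_prod:
  assumes "I \<subseteq> Xg g" "J \<subseteq> Xg g" "card I = card J"
  shows "eps g I * eps g J = (-1::int)^(\<Sum>I + \<Sum>J)"
proof -
  define c where "c = (-1::int)^(\<Sum>{1..card I})"
  have a: "eps g I * (-1)^(\<Sum>I) = c" using eps_sign[OF assms(1)] c_def by simp
  have b: "eps g J * (-1)^(\<Sum>J) = c" using eps_sign[OF assms(2)] c_def assms(3) by simp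
  have a': "eps g I = c * (-1)^(\<Sum>I)"
    using arg_cong[OF a, of "\<lambda>z. z * (-1)^(\<Sum>I)"] m1sq_int[of "\<Sum>I"] by (simp add: mult.assoc)
  have b': "eps g J = c * (-1)^(\<Sum>J)"
    using arg_cong[OF b, of "\<lambda>z. z * (-1)^(\<Sum>J)"] m1sq_int[of "\<Sum>J"] by (simp add: mult.assoc)
  have cc: "c * c = 1" unfolding c_def by (rule m1sq_int)
  show ?thesis unfolding a' b' power_add using cc by (simp add: algebra_simps)
qed

theorem lemma2p3:
  fixes g k :: nat and v :: "nat \<Rightarrow> nat \<Rightarrow> complex"
  assumes "1 \<le> k" and "k < g"
  shows "\<forall>I\<in>Pk (g - k) (Xg g). \<forall>J\<in>Pk (g - k) (Xg g).
           star_prod g (\<lambda>i a b. v i a * v i b) k I J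
             = inverse (of_nat (fact k)) * wvec g v k I * wvec g v k J"
proof (intro ballI)
  fix I J assume I: "I \<in> Pk (g - k) (Xg g)" and J: "J \<in> Pk (g - k) (Xg g)"
  have IX: "I \<subseteq> Xg g" "card I = g - k" and JX: "J \<subseteq> Xg g" "card J = g - k"
    using I J by (auto simp: Pk_def)
  have cX: "card (Xg g) = g" by (simp add: Xg_def)
  have fX: "finite (Xg g)" by (simp add: Xg_def)
  have kk: "k = Suc (k - 1)" using assms by simp
  have cI: "card (Xg g - I) = Suc (k - 1)"
    using IX cX fX assms by (simp add: card_Diff_subset finite_subset)
  have cJ: "card (Xg g - J) = Suc (k - 1)"
    using JX cX fX assms by (simp add: card_Diff_subset finite_subset)
  have it: "iter_sqcap (\<lambda>i a b. v i a * v i b) k (Xg g - I) (Xg g - J)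
     = inverse (of_nat (fact k)) * det (subA v k (Xg g - I)) * det (subA v k (Xg g - J))"
    using iter_main[OF cI cJ, of v] kk by simp
  have ep: "of_int (eps g I) * of_int (eps g J) = ((-1::complex)^(\<Sum>I + \<Sum>J))"
  proof -
    have "of_int (eps g I * eps g J) = (of_int ((-1::int)^(\<Sum>I + \<Sum>J)) :: complex)"
      using eps_prod[OF IX(1) JX(1)] IX(2) JX(2) by simp
    then show ?thesis by simp
  qed
  show "star_prod g (\<lambda>i a b. v i a * v i b) k I J
             = inverse (of_nat (fact k)) * wvec g v k I * wvec g v k J"
    unfolding star_prod_def it wvec_def
    using ep by (simp add: algebra_simps)
qed

end
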